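(* Let $V$ be a vector space of dimension $2r$ ($r\ge1$) over $\mathbb{F}_2$ with nondegenerate quadratic form $Q$. (i) If $Q$ is hyperbolic and $r\equiv 0$ or $1\pmod 4$, then $V$ has a symmetric basis. (ii) If $Q$ is elliptic and $r\equiv 2$ or $3\pmod 4$, then $V$ has a symmetric basis.
   Context: The associated bilinear form of $Q$ is $B(u,v)=Q(u+v)-Q(u)-Q(v)$, and $Q$ is nondegenerate if $B$ is. $Q$ on a $2r$-dimensional space is hyperbolic if $V$ has a basis $e_1,\dots,e_r,f_1,\dots,f_r$ with $Q(e_i)=Q(f_i)=0$, $B(e_i,e_j)=B(f_i,f_j)=0$, $B(e_i,f_j)=\delta_{ij}$; it is elliptic if $V$ has a basis $e_1,\dots,e_{r-1},f_1,\dots,f_{r-1},x,y$ with the same relations among the $e_i,f_i$, all $e_i,f_i$ orthogonal to $x,y$, $Q(x)=1$, $B(x,y)=1$, $Q(y)=\zeta$ where $X^2+X+\zeta$ is irreducible over $\mathbb{F}_2$ (i.e. $\zeta=1$). A basis $\{v_1,\dots,v_{2r}\}$ is symmetric if $Q(v_i)=0$ for all $i$ and $B(v_i,v_j)=1$ for all $i\neq j$. *)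

theory Defs
  imports Main "HOL.Vector_Spaces" "HOL-Library.Z2"
begin

definition assoc_bilinear :: "('v::ab_group_add \<Rightarrow> bit) \<Rightarrow> 'v \<Rightarrow> 'v \<Rightarrow> bit" where
  "assoc_bilinear Q u v = Q (u + v) - Q u - Q v"

definition quadratic_form :: "(bit \<Rightarrow> 'v::ab_group_add \<Rightarrow> 'v) \<Rightarrow> ('v \<Rightarrow> bit) \<Rightarrow> bool" where
  "quadratic_form scale Q \<longleftrightarrow>
     (\<forall>a v. Q (scale a v) = a^2 * Q v) \<and>
     (\<forall>u w v. assoc_bilinear Q (u + w) v = assoc_bilinear Q u v + assoc_bilinear Q w v) \<and>
     (\<forall>u w v. assoc_bilinear Q v (u + w) = assoc_bilinear Q v u + assoc_bilinear Q v w) \<and>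
     (\<forall>a u v. assoc_bilinear Q (scale a u) v = a * assoc_bilinear Q u v) \<and>
     (\<forall>a u v. assoc_bilinear Q u (scale a v) = a * assoc_bilinear Q u v)"

definition nondegenerate :: "('v::ab_group_add \<Rightarrow> bit) \<Rightarrow> bool" where
  "nondegenerate Q \<longleftrightarrow> (\<forall>u. (\<forall>v. assoc_bilinear Q u v = 0) \<longrightarrow> u = 0)"

definition is_basis_family :: "(bit \<Rightarrow> 'v::ab_group_add \<Rightarrow> 'v) \<Rightarrow> nat \<Rightarrow> (nat \<Rightarrow> 'v) \<Rightarrow> bool" where
  "is_basis_family scale n w \<longleftrightarrow>
     inj_on w {..<n} \<and>
     \<not> module.dependent scale (w ` {..<n}) \<and>
     module.span scale (w ` {..<n}) = UNIV"

text \<open>Hyperbolic: basis e_1..e_r, f_1..f_r (indexed 0..r-1 here).\<close>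
definition hyperbolic :: "(bit \<Rightarrow> 'v::ab_group_add \<Rightarrow> 'v) \<Rightarrow> nat \<Rightarrow> ('v \<Rightarrow> bit) \<Rightarrow> bool" where
  "hyperbolic scale r Q \<longleftrightarrow>
     (\<exists>e f :: nat \<Rightarrow> 'v.
        is_basis_family scale (2*r) (\<lambda>i. if i < r then e i else f (i - r)) \<and>
        (\<forall>i<r. Q (e i) = 0 \<and> Q (f i) = 0) \<and>
        (\<forall>i<r. \<forall>j<r. assoc_bilinear Q (e i) (e j) = 0 \<and> assoc_bilinear Q (f i) (f j) = 0 \<and>
                   assoc_bilinear Q (e i) (f j) = (if i = j then 1 else 0)))"

text \<open>Elliptic: basis e_1..e_{r-1}, f_1..f_{r-1}, x, y (zeta = 1 over F_2).\<close>
definition elliptic :: "(bit \<Rightarrow> 'v::ab_group_add \<Rightarrow> 'v) \<Rightarrow> nat \<Rightarrow> ('v \<Rightarrow> bit) \<Rightarrow> bool" where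
  "elliptic scale r Q \<longleftrightarrow>
     (\<exists>(e :: nat \<Rightarrow> 'v) f x y.
        is_basis_family scale (2*r)
          (\<lambda>i. if i < r - 1 then e i else if i < 2*(r - 1) then f (i - (r - 1))
               else if i = 2*(r - 1) then x else y) \<and>
        (\<forall>i<r-1. Q (e i) = 0 \<and> Q (f i) = 0) \<and>
        (\<forall>i<r-1. \<forall>j<r-1. assoc_bilinear Q (e i) (e j) = 0 \<and> assoc_bilinear Q (f i) (f j) = 0 \<and>
                   assoc_bilinear Q (e i) (f j) = (if i = j then 1 else 0)) \<and>
        (\<forall>i<r-1. assoc_bilinear Q (e i) x = 0 \<and> assoc_bilinear Q (e i) y = 0 \<and>
                 assoc_bilinear Q (f i) x = 0 \<and> assoc_bilinear Q (f i) y = 0) \<and>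
        Q x = 1 \<and> assoc_bilinear Q x y = 1 \<and> Q y = 1)"

definition has_symmetric_basis :: "(bit \<Rightarrow> 'v::ab_group_add \<Rightarrow> 'v) \<Rightarrow> nat \<Rightarrow> ('v \<Rightarrow> bit) \<Rightarrow> bool" where
  "has_symmetric_basis scale n Q \<longleftrightarrow>
     (\<exists>v :: nat \<Rightarrow> 'v. is_basis_family scale n v \<and>
        (\<forall>i<n. Q (v i) = 0) \<and>
        (\<forall>i<n. \<forall>j<n. i \<noteq> j \<longrightarrow> assoc_bilinear Q (v i) (v j) = 1))"

end

theory Submission
  imports Defs
begin

declare add_bit_eq_xor[simp del] mult_bit_eq_and[simp del]

lemma bit_add_self[simp]: "(x::bit) + x = 0"
  by (cases x) auto

lemma bit_one_one[simp]: "(1::bit) + 1 = 0"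
  by simp

lemma B_sym: "assoc_bilinear Q u v = assoc_bilinear Q v u"
  unfolding assoc_bilinear_def by (metis add.commute diff_right_commute)

lemma bit_of_nat: "(of_nat n :: bit) = (if odd n then 1 else 0)"
  by (induction n) auto

lemma bit_cases': "(x::bit) = 0 \<or> x = 1"
  by (cases x) auto

context
  fixes scale :: "bit \<Rightarrow> 'v::ab_group_add \<Rightarrow> 'v" and Q :: "'v \<Rightarrow> bit"
  assumes vs: "vector_space scale" and qf: "quadratic_form scale Q"
begin

lemma Badd1: "assoc_bilinear Q (u + w) v = assoc_bilinear Q u v + assoc_bilinear Q w v"
  using qf unfolding quadratic_form_def by blast
lemma Badd2: "assoc_bilinear Q v (u + w) = assoc_bilinear Q v u + assoc_bilinear Q v w"
  using qf unfolding quadratic_form_def by blast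
lemma Bscale1: "assoc_bilinear Q (scale a u) v = a * assoc_bilinear Q u v"
  using qf unfolding quadratic_form_def by blast

lemma Q0: "Q 0 = 0"
proof -
  interpret vector_space scale by (rule vs)
  have "Q (scale 0 0) = 0^2 * Q 0" using qf unfolding quadratic_form_def by blast
  then show ?thesis by simp
qed

lemma Balt: "assoc_bilinear Q x x = 0"
proof -
  interpret vector_space scale by (rule vs)
  have "x + x = scale (1+1) x" by (simp only: scale_left_distrib scale_one)
  also have "\<dots> = 0" by (simp only: one_add_one bit_2_eq_0 scale_zero_left)
  finally show ?thesis unfolding assoc_bilinear_def using Q0 by simp
qed

lemma Qadd: "Q (x + y) = Q x + Q y + assoc_bilinear Q x y"
  unfolding assoc_bilinear_def by algebra

lemma B0l: "assoc_bilinear Q 0 y = 0"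
  using Badd1[of 0 0 y] by simp
lemma B0r: "assoc_bilinear Q y 0 = 0"
  using Badd2[of y 0 0] by simp

lemma Bsum1: "assoc_bilinear Q (sum f A) y = (\<Sum>a\<in>A. assoc_bilinear Q (f a) y)"
  by (induction A rule: infinite_finite_induct) (auto simp: B0l Badd1)
lemma Bsum2: "assoc_bilinear Q y (sum f A) = (\<Sum>a\<in>A. assoc_bilinear Q y (f a))"
  by (induction A rule: infinite_finite_induct) (auto simp: B0r Badd2)

lemma Qsum_orth:
  assumes "finite A" "\<forall>a\<in>A. \<forall>b\<in>A. a \<noteq> b \<longrightarrow> assoc_bilinear Q (f a) (f b) = 0"
  shows "Q (sum f A) = (\<Sum>a\<in>A. Q (f a))"
  using assms
proof (induction A rule: finite_induct)
  case empty then show ?case by (simp add: Q0)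
next
  case (insert x F)
  have "assoc_bilinear Q (f x) (sum f F) = 0"
    using insert by (auto simp: Bsum2 intro!: sum.neutral)
  then show ?case using insert by (simp add: Qadd)
qed


lemma planes_sym:
  fixes n :: nat and p q :: "nat \<Rightarrow> 'v" and c :: "nat \<Rightarrow> bit"
  assumes pq: "\<forall>b<n. assoc_bilinear Q (p b) (q b) = 1 \<and> Q (p b) = c b \<and> Q (q b) = c b"
    and cdef: "\<forall>b<n. c b = (if odd b then 1 else 0)"
    and orth: "\<forall>b<n. \<forall>d<n. b \<noteq> d \<longrightarrow> assoc_bilinear Q (p b) (p d) = 0 \<and>
                  assoc_bilinear Q (p b) (q d) = 0 \<and> assoc_bilinear Q (q b) (q d) = 0"
  shows "\<exists>v. (\<forall>k<2*n. Q (v k) = 0) \<and> (\<forall>k<2*n. \<forall>l<2*n. k \<noteq> l \<longrightarrow> assoc_bilinear Q (v k) (v l) = 1)"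
proof -
  define s where "s d = p d + q d" for d
  define T where "T b = sum s {..<b}" for b
  define u where "u k = (if even k then p (k div 2) else q (k div 2))" for k
  define v where "v k = u k + T (k div 2)" for k
  have Bpq: "assoc_bilinear Q (q b) (p b) = 1" if "b < n" for b
    using pq that B_sym by metis
  have orth2: "assoc_bilinear Q (q b) (p d) = 0" if "b < n" "d < n" "b \<noteq> d" for b d
    using orth that B_sym by metis
  have ss: "assoc_bilinear Q (s d) (s d') = 0" if "d < n" "d' < n" for d d'
  proof (cases "d = d'")
    case True then show ?thesis by (simp add: Balt)
  next
    case False
    then show ?thesis using orth that orth2 by (simp add: s_def Badd1 Badd2)
  qed
  have sT: "assoc_bilinear Q (s d) (T b) = 0" if "d < n" "b \<le> n" for d b
    unfolding T_def Bsum2 using ss that by (auto intro!: sum.neutral)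
  have TT: "assoc_bilinear Q (T b) (T b') = 0" if "b \<le> n" "b' \<le> n" for b b'
    using that by (subst T_def, subst Bsum1) (auto intro!: sum.neutral simp: sT)
  have Qs: "Q (s d) = 1" if "d < n" for d
    using pq that by (simp add: s_def Qadd)
  have QT: "Q (T b) = c b" if "b < n" for b
  proof -
    have "Q (T b) = (\<Sum>d\<in>{..<b}. Q (s d))"
      unfolding T_def using that by (intro Qsum_orth) (auto simp: ss)
    also have "\<dots> = (\<Sum>d\<in>{..<b}. 1)" using that by (intro sum.cong) (auto simp: Qs)
    also have "\<dots> = of_nat b" by simp
    finally show ?thesis using cdef that by (simp add: bit_of_nat)
  qed
  have us: "assoc_bilinear Q (u k) (s d) = (if d = k div 2 then 1 else 0)" if "k < 2*n" "d < n" for k d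
    using that pq orth orth2 Bpq by (auto simp: u_def s_def Badd2 Balt)
  have uT: "assoc_bilinear Q (u k) (T b) = (if k div 2 < b then 1 else 0)" if "k < 2*n" "b \<le> n" for k b
  proof -
    have "assoc_bilinear Q (u k) (T b) = (\<Sum>d\<in>{..<b}. if d = k div 2 then 1 else 0)"
      unfolding T_def Bsum2 using that by (intro sum.cong) (auto simp: us)
    also have "\<dots> = (if k div 2 < b then 1 else 0)"
      using that by (simp add: sum.delta)
    finally show ?thesis .
  qed
  have Qu: "Q (u k) = c (k div 2)" if "k < 2*n" for k
    using pq that by (auto simp: u_def)
  have uu: "assoc_bilinear Q (u k) (u l) = (if k div 2 = l div 2 \<and> k \<noteq> l then 1 else 0)"
    if "k < 2*n" "l < 2*n" for k l
  proof (cases "k div 2 = l div 2")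
    case True
    show ?thesis
    proof (cases "k = l")
      case True then show ?thesis by (simp add: Balt)
    next
      case False
      then have "even k \<noteq> even l" using \<open>k div 2 = l div 2\<close>
        by (metis div_mult_mod_eq even_iff_mod_2_eq_zero mod2_eq_if)
      then show ?thesis using True False that pq Bpq by (auto simp: u_def)
    qed
  next
    case False
    then show ?thesis using that orth orth2 by (auto simp: u_def)
  qed
  show ?thesis
  proof (intro exI[of _ v] conjI allI impI)
    fix k assume k: "k < 2*n"
    have "Q (v k) = c (k div 2) + c (k div 2) + 0"
      unfolding v_def Qadd using k by (simp add: Qu QT uT less_mult_imp_div_less)
    then show "Q (v k) = 0" by simp
  next
    fix k l assume k: "k < 2*n" and l: "l < 2*n" and kl: "k \<noteq> l"
    have "assoc_bilinear Q (v k) (v l) = assoc_bilinear Q (u k) (u l) + assoc_bilinear Q (u k) (T (l div 2))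
       + assoc_bilinear Q (u l) (T (k div 2)) + assoc_bilinear Q (T (k div 2)) (T (l div 2))"
      unfolding v_def Badd1 Badd2 by (simp add: B_sym[of Q "T (k div 2)" "u l"] algebra_simps)
    also have "\<dots> = 1"
      using k l kl by (auto simp: uu uT TT less_mult_imp_div_less)
    finally show "assoc_bilinear Q (v k) (v l) = 1" .
  qed
qed


lemma sym_basis:
  fixes N :: nat and v :: "nat \<Rightarrow> 'v"
  assumes dim: "vector_space.dim scale (UNIV :: 'v set) = N" and Npos: "N > 0" and Neven: "even N"
    and Qv: "\<forall>k<N. Q (v k) = 0"
    and Bv: "\<forall>k<N. \<forall>l<N. k \<noteq> l \<longrightarrow> assoc_bilinear Q (v k) (v l) = 1"
  shows "is_basis_family scale N v"
proof -
  interpret vector_space scale by (rule vs)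
  have Bv': "assoc_bilinear Q (v k) (v l) = (if k = l then 0 else 1)" if "k < N" "l < N" for k l
    using Bv that by (auto simp: Balt)
  have inj: "inj_on v {..<N}"
  proof (rule inj_onI)
    fix k l assume "k \<in> {..<N}" "l \<in> {..<N}" "v k = v l"
    then show "k = l" using Bv'[of k l] Bv'[of k k] by (auto split: if_splits)
  qed
  define S where "S = v ` {..<N}"
  have cardS: "card S = N" unfolding S_def using inj by (simp add: card_image)
  have finS: "finite S" unfolding S_def by simp
  have indep: "\<not> dependent S"
  proof
    assume "dependent S"
    then obtain w where w: "\<exists>x\<in>S. w x \<noteq> 0" and ws: "(\<Sum>x\<in>S. scale (w x) x) = 0"
      using dependent_finite[OF finS] by blast
    define \<sigma> where "\<sigma> = (\<Sum>x\<in>S. w x)"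
    have wl: "w (v l) = \<sigma>" if l: "l < N" for l
    proof -
      have "0 = assoc_bilinear Q (\<Sum>x\<in>S. scale (w x) x) (v l)" using ws by (simp add: B0l)
      also have "\<dots> = (\<Sum>x\<in>S. w x * (if x = v l then 0 else 1))"
        unfolding Bsum1 Bscale1
      proof (rule sum.cong)
        fix x assume "x \<in> S"
        then obtain k where k: "k < N" "x = v k" unfolding S_def by auto
        have "(x = v l) = (k = l)" using inj k l by (auto dest: inj_onD)
        then show "w x * assoc_bilinear Q x (v l) = w x * (if x = v l then 0 else 1)"
          using Bv'[OF k(1) l] k by simp
      qed simp
      also have "\<dots> = (\<Sum>x\<in>S. if x = v l then 0 else w x)"
        by (rule sum.cong) auto
      also have "\<dots> = (\<Sum>x\<in>S - {v l}. w x)"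
        using finS by (simp add: sum.If_cases Diff_eq)
      finally have "(\<Sum>x\<in>S - {v l}. w x) = 0" by simp
      moreover have "\<sigma> = w (v l) + (\<Sum>x\<in>S - {v l}. w x)"
        unfolding \<sigma>_def using finS l by (simp add: S_def sum.remove)
      ultimately show ?thesis by simp
    qed
    have "\<sigma> = (\<Sum>x\<in>S. \<sigma>)"
    proof -
      have "(\<Sum>x\<in>S. w x) = (\<Sum>x\<in>S. \<sigma>)" by (rule sum.cong) (auto simp: S_def wl)
      then show ?thesis unfolding \<sigma>_def .
    qed
    also have "\<dots> = of_nat N * \<sigma>" using cardS by simp
    also have "\<dots> = 0" using Neven by (simp add: bit_of_nat)
    finally have "\<sigma> = 0" .
    then show False using w wl unfolding S_def by auto
  qed
  have span: "span S = UNIV"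
  proof (rule ccontr)
    assume "span S \<noteq> UNIV"
    then obtain a where a: "a \<notin> span S" by auto
    then have ia: "independent (insert a S)" using indep by (simp add: independent_insertI)
    obtain B where B: "independent B" "UNIV \<subseteq> span B" "card B = N"
      using basis_exists[of UNIV] dim by metis
    have "finite B" using B(3) Npos card_ge_0_finite by auto
    then have "card (insert a S) \<le> card B"
      using independent_span_bound[OF _ ia] B by auto
    moreover have "a \<notin> S" using a span_base by blast
    ultimately show False using cardS B(3) finS by simp
  qed
  show ?thesis unfolding is_basis_family_def using inj indep span S_def by simp
qed


end

definition planes :: "('v::ab_group_add \<Rightarrow> bit) \<Rightarrow> nat \<Rightarrow> (nat \<Rightarrow> 'v) \<Rightarrow> (nat \<Rightarrow> 'v) \<Rightarrow> bool" where
  "planes Q n p q \<longleftrightarrow>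
     (\<forall>b<n. assoc_bilinear Q (p b) (q b) = 1 \<and> Q (p b) = (if odd b then 1 else 0) \<and> Q (q b) = (if odd b then 1 else 0))
   \<and> (\<forall>b<n. \<forall>d<n. b \<noteq> d \<longrightarrow> assoc_bilinear Q (p b) (p d) = 0 \<and>
                  assoc_bilinear Q (p b) (q d) = 0 \<and> assoc_bilinear Q (q b) (q d) = 0)"

definition hyp_sys :: "('v::ab_group_add \<Rightarrow> bit) \<Rightarrow> nat \<Rightarrow> (nat \<Rightarrow> 'v) \<Rightarrow> (nat \<Rightarrow> 'v) \<Rightarrow> bool" where
  "hyp_sys Q n e f \<longleftrightarrow> (\<forall>i<n. Q (e i) = 0 \<and> Q (f i) = 0) \<and>
     (\<forall>i<n. \<forall>j<n. assoc_bilinear Q (e i) (e j) = 0 \<and> assoc_bilinear Q (f i) (f j) = 0 \<and>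
                   assoc_bilinear Q (e i) (f j) = (if i = j then 1 else 0))"

definition transfer :: "('v::ab_group_add \<Rightarrow> bit) \<Rightarrow> nat \<Rightarrow> (nat \<Rightarrow> 'v) \<Rightarrow> (nat \<Rightarrow> 'v) \<Rightarrow> nat \<Rightarrow> (nat \<Rightarrow> 'v) \<Rightarrow> (nat \<Rightarrow> 'v) \<Rightarrow> bool" where
  "transfer Q m e f n p q \<longleftrightarrow> (\<forall>w. (\<forall>i<m. assoc_bilinear Q (e i) w = 0 \<and> assoc_bilinear Q (f i) w = 0) \<longrightarrow>
                  (\<forall>b<n. assoc_bilinear Q (p b) w = 0 \<and> assoc_bilinear Q (q b) w = 0))"

lemma hyp_sys_mono: "hyp_sys Q n e f \<Longrightarrow> m \<le> n \<Longrightarrow> hyp_sys Q m e f"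
  unfolding hyp_sys_def by auto

lemma transfer_mono: "transfer Q m e f n p q \<Longrightarrow> m \<le> m' \<Longrightarrow> transfer Q m' e f n p q"
  unfolding transfer_def by auto

context
  fixes scale :: "bit \<Rightarrow> 'v::ab_group_add \<Rightarrow> 'v" and Q :: "'v \<Rightarrow> bit"
  assumes vs: "vector_space scale" and qf: "quadratic_form scale Q"
begin

lemma planes_ext:
  assumes "planes Q n p q" "assoc_bilinear Q x y = 1" "Q x = (if odd n then 1 else 0)" "Q y = (if odd n then 1 else 0)"
    "\<forall>b<n. assoc_bilinear Q (p b) x = 0 \<and> assoc_bilinear Q (p b) y = 0 \<and>
           assoc_bilinear Q (q b) x = 0 \<and> assoc_bilinear Q (q b) y = 0"
  shows "planes Q (Suc n) (p(n := x)) (q(n := y))"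
proof -
  have xp: "assoc_bilinear Q x (p b) = 0" "assoc_bilinear Q y (p b) = 0"
     "assoc_bilinear Q x (q b) = 0" "assoc_bilinear Q y (q b) = 0" if "b < n" for b
    using assms(5) that B_sym by metis+
  show ?thesis
    unfolding planes_def
  proof (rule conjI; intro allI impI)
    fix b assume "b < Suc n"
    then show "assoc_bilinear Q ((p(n := x)) b) ((q(n := y)) b) = 1 \<and>
          Q ((p(n := x)) b) = (if odd b then 1 else 0) \<and> Q ((q(n := y)) b) = (if odd b then 1 else 0)"
      using assms(1-4) unfolding planes_def by (cases "b = n") auto
  next
    fix b d assume "b < Suc n" "d < Suc n" "b \<noteq> d"
    then show "assoc_bilinear Q ((p(n := x)) b) ((p(n := x)) d) = 0 \<and>
         assoc_bilinear Q ((p(n := x)) b) ((q(n := y)) d) = 0 \<and>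
         assoc_bilinear Q ((q(n := y)) b) ((q(n := y)) d) = 0"
      using assms(1,5) xp unfolding planes_def
      by (cases "b = n"; cases "d = n") (simp_all add: less_Suc_eq)
  qed
qed

lemma planes_sym_basis:
  assumes "planes Q n p q"
  shows "\<exists>v. (\<forall>k<2*n. Q (v k) = 0) \<and> (\<forall>k<2*n. \<forall>l<2*n. k \<noteq> l \<longrightarrow> assoc_bilinear Q (v k) (v l) = 1)"
  using assms unfolding planes_def
  by (intro planes_sym[OF vs qf, of n p q "\<lambda>b. if odd b then 1 else 0"]) auto


lemma core_planes:
  fixes e f :: "nat \<Rightarrow> 'v"
  shows "hyp_sys Q (4*a) e f \<Longrightarrow> \<exists>p q. planes Q (4*a) p q \<and> transfer Q (4*a) e f (4*a) p q"
proof (induction a)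
  case 0
  then show ?case unfolding planes_def transfer_def by auto
next
  case (Suc a)
  define N where "N = 4*a"
  have N4: "4 * Suc a = N + 4" unfolding N_def by simp
  have hs: "hyp_sys Q (N+4) e f" using Suc.prems N4 by (simp add: add.commute)
  obtain p q where pq: "planes Q N p q" and tr: "transfer Q N e f N p q"
    using Suc.IH hyp_sys_mono[OF hs, of N] unfolding N_def by auto
  have ee: "assoc_bilinear Q (e i) (e j) = 0" if "i < N+4" "j < N+4" for i j
    using hs that unfolding hyp_sys_def by blast
  have ff: "assoc_bilinear Q (f i) (f j) = 0" if "i < N+4" "j < N+4" for i j
    using hs that unfolding hyp_sys_def by blast
  have ef: "assoc_bilinear Q (e i) (f j) = (if i = j then 1 else 0)" if "i < N+4" "j < N+4" for i j
    using hs that unfolding hyp_sys_def by blast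
  have fe: "assoc_bilinear Q (f j) (e i) = (if i = j then 1 else 0)" if "i < N+4" "j < N+4" for i j
    using ef[OF that] B_sym by metis
  have Qe: "Q (e i) = 0" "Q (f i) = 0" if "i < N+4" for i using hs that unfolding hyp_sys_def by auto
  note simps = Badd1[OF vs qf] Badd2[OF vs qf] Qadd[OF vs qf] ee ff ef fe Qe Balt[OF vs qf]
  define x0 where "x0 = e N"
  define y0 where "y0 = f N"
  define x1 where "x1 = e (N+1) + f (N+1)"
  define y1 where "y1 = e (N+1) + e (N+3) + f (N+3)"
  define x2 where "x2 = e (N+2)"
  define y2 where "y2 = f (N+2)"
  define x3 where "x3 = e (N+3) + f (N+3)"
  define y3 where "y3 = e (N+1) + f (N+1) + e (N+3)"
  have oldo: "\<forall>i<N. assoc_bilinear Q (e i) w = 0 \<and> assoc_bilinear Q (f i) w = 0"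
    if "w = x0 \<or> w = y0 \<or> w = x1 \<or> w = y1 \<or> w = x2 \<or> w = y2 \<or> w = x3 \<or> w = y3" for w
    using that by (elim disjE) (simp_all add: x0_def y0_def x1_def y1_def x2_def y2_def x3_def y3_def simps)
  have old: "assoc_bilinear Q (p b) w = 0 \<and> assoc_bilinear Q (q b) w = 0"
    if "b < N" "w = x0 \<or> w = y0 \<or> w = x1 \<or> w = y1 \<or> w = x2 \<or> w = y2 \<or> w = x3 \<or> w = y3" for w b
    using tr oldo[OF that(2)] that(1) unfolding transfer_def by blast
  have oddN: "odd (N+1)" "odd (N+3)" "\<not> odd N" "\<not> odd (N+2)" unfolding N_def by auto
  have B01: "assoc_bilinear Q x0 x1 = 0" "assoc_bilinear Q x0 y1 = 0" "assoc_bilinear Q y0 x1 = 0" "assoc_bilinear Q y0 y1 = 0"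
    "assoc_bilinear Q x0 x2 = 0" "assoc_bilinear Q x0 y2 = 0" "assoc_bilinear Q y0 x2 = 0" "assoc_bilinear Q y0 y2 = 0"
    "assoc_bilinear Q x1 x2 = 0" "assoc_bilinear Q x1 y2 = 0" "assoc_bilinear Q y1 x2 = 0" "assoc_bilinear Q y1 y2 = 0"
    "assoc_bilinear Q x0 x3 = 0" "assoc_bilinear Q x0 y3 = 0" "assoc_bilinear Q y0 x3 = 0" "assoc_bilinear Q y0 y3 = 0"
    "assoc_bilinear Q x1 x3 = 0" "assoc_bilinear Q x1 y3 = 0" "assoc_bilinear Q y1 x3 = 0" "assoc_bilinear Q y1 y3 = 0"
    "assoc_bilinear Q x2 x3 = 0" "assoc_bilinear Q x2 y3 = 0" "assoc_bilinear Q y2 x3 = 0" "assoc_bilinear Q y2 y3 = 0"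
    by (simp_all add: x0_def y0_def x1_def y1_def x2_def y2_def x3_def y3_def simps)
  have Bxy: "assoc_bilinear Q x0 y0 = 1" "assoc_bilinear Q x1 y1 = 1" "assoc_bilinear Q x2 y2 = 1" "assoc_bilinear Q x3 y3 = 1"
    by (simp_all add: x0_def y0_def x1_def y1_def x2_def y2_def x3_def y3_def simps)
  have Qxy: "Q x0 = 0" "Q y0 = 0" "Q x1 = 1" "Q y1 = 1" "Q x2 = 0" "Q y2 = 0" "Q x3 = 1" "Q y3 = 1"
    by (simp_all add: x0_def y0_def x1_def y1_def x2_def y2_def x3_def y3_def simps)
  have P1: "planes Q (Suc N) (p(N := x0)) (q(N := y0))"
    by (rule planes_ext[OF pq]) (simp_all add: old oddN Bxy Qxy)
  have P2: "planes Q (Suc (Suc N)) (p(N := x0, Suc N := x1)) (q(N := y0, Suc N := y1))"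
    by (rule planes_ext[OF P1]) (auto simp: less_Suc_eq old oddN Bxy Qxy B01)
  have P3: "planes Q (Suc (Suc (Suc N))) (p(N := x0, Suc N := x1, Suc (Suc N) := x2)) (q(N := y0, Suc N := y1, Suc (Suc N) := y2))"
    by (rule planes_ext[OF P2]) (auto simp: less_Suc_eq old oddN Bxy Qxy B01)
  have P4: "planes Q (Suc (Suc (Suc (Suc N)))) (p(N := x0, Suc N := x1, Suc (Suc N) := x2, Suc (Suc (Suc N)) := x3))
          (q(N := y0, Suc N := y1, Suc (Suc N) := y2, Suc (Suc (Suc N)) := y3))"
    by (rule planes_ext[OF P3]) (auto simp: less_Suc_eq old oddN Bxy Qxy B01)
  have T4: "transfer Q (N+4) e f (N+4) (p(N := x0, Suc N := x1, Suc (Suc N) := x2, Suc (Suc (Suc N)) := x3))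
          (q(N := y0, Suc N := y1, Suc (Suc N) := y2, Suc (Suc (Suc N)) := y3))"
    unfolding transfer_def
  proof (intro allI impI)
    fix w b assume w: "\<forall>i<N + 4. assoc_bilinear Q (e i) w = 0 \<and> assoc_bilinear Q (f i) w = 0" and b: "b < N + 4"
    have wN: "\<forall>b<N. assoc_bilinear Q (p b) w = 0 \<and> assoc_bilinear Q (q b) w = 0"
      using tr w unfolding transfer_def by auto
    consider "b < N" | "b = N" | "b = Suc N" | "b = Suc (Suc N)" | "b = Suc (Suc (Suc N))" using b by linarith
    then show "assoc_bilinear Q ((p(N := x0, Suc N := x1, Suc (Suc N) := x2, Suc (Suc (Suc N)) := x3)) b) w = 0 \<and>
         assoc_bilinear Q ((q(N := y0, Suc N := y1, Suc (Suc N) := y2, Suc (Suc (Suc N)) := y3)) b) w = 0"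
      by cases (use w wN in \<open>auto simp: x0_def y0_def x1_def y1_def x2_def y2_def x3_def y3_def Badd1[OF vs qf]\<close>)
  qed
  show ?case unfolding N4 using P4 T4 by (auto simp: numeral_eq_Suc)
qed

end

theorem lemma3p3:
  fixes scale :: "bit \<Rightarrow> 'v::ab_group_add \<Rightarrow> 'v"
    and Q :: "'v \<Rightarrow> bit" and r :: nat
  assumes "vector_space scale"
    and "vector_space.dim scale (UNIV :: 'v set) = 2 * r"
    and "r \<ge> 1"
    and "quadratic_form scale Q"
    and "nondegenerate Q"
  shows "(hyperbolic scale r Q \<and> (r mod 4 = 0 \<or> r mod 4 = 1) \<longrightarrow> has_symmetric_basis scale (2*r) Q)
       \<and> (elliptic scale r Q \<and> (r mod 4 = 2 \<or> r mod 4 = 3) \<longrightarrow> has_symmetric_basis scale (2*r) Q)"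
proof -
  note vs = assms(1) and qf = assms(4)
  have fin: "has_symmetric_basis scale (2*r) Q" if P: "planes Q r p q" for p q
  proof -
    obtain v where v: "\<forall>k<2*r. Q (v k) = 0" "\<forall>k<2*r. \<forall>l<2*r. k \<noteq> l \<longrightarrow> assoc_bilinear Q (v k) (v l) = 1"
      using planes_sym_basis[OF vs qf P] by blast
    have "is_basis_family scale (2*r) v"
      by (rule sym_basis[OF vs qf]) (use assms(2,3) v in auto)
    then show ?thesis unfolding has_symmetric_basis_def using v by blast
  qed
  define a where "a = r div 4"
  have r4: "r = 4*a + r mod 4" unfolding a_def by simp
  have Bs: "assoc_bilinear Q u w = assoc_bilinear Q w u" for u w by (rule B_sym)
  show ?thesis
  proof (intro conjI impI)
    assume H: "hyperbolic scale r Q \<and> (r mod 4 = 0 \<or> r mod 4 = 1)"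
    then obtain e f where hs: "hyp_sys Q r e f" unfolding hyperbolic_def hyp_sys_def by blast
    have hs4: "hyp_sys Q (4*a) e f" using hyp_sys_mono[OF hs] r4 by simp
    obtain p q where pq: "planes Q (4*a) p q" and tr: "transfer Q (4*a) e f (4*a) p q"
      using core_planes[OF vs qf hs4] by blast
    consider "r mod 4 = 0" | "r mod 4 = 1" using H by argo
    then show "has_symmetric_basis scale (2*r) Q"
    proof cases
      case 1
      then show ?thesis using fin pq r4 by simp
    next
      case 2
      have ra: "4*a < r" using r4 2 by simp
      have o: "\<forall>i<4*a. assoc_bilinear Q (e i) w = 0 \<and> assoc_bilinear Q (f i) w = 0"
        if "w = e (4*a) \<or> w = f (4*a)" for w
        using that hs ra unfolding hyp_sys_def by (auto simp: Bs[of "f _" "e _"])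
      have "planes Q (Suc (4*a)) (p(4*a := e (4*a))) (q(4*a := f (4*a)))"
        by (rule planes_ext[OF vs qf pq]) (use hs ra tr o in \<open>auto simp: hyp_sys_def transfer_def\<close>)
      then show ?thesis using fin r4 2 by simp
    qed
  next
    assume H: "elliptic scale r Q \<and> (r mod 4 = 2 \<or> r mod 4 = 3)"
    then obtain e f x y where hs: "hyp_sys Q (r - 1) e f"
      and xo: "\<forall>i<r-1. assoc_bilinear Q (e i) x = 0 \<and> assoc_bilinear Q (e i) y = 0 \<and>
                 assoc_bilinear Q (f i) x = 0 \<and> assoc_bilinear Q (f i) y = 0"
      and xy: "Q x = 1" "assoc_bilinear Q x y = 1" "Q y = 1"
      unfolding elliptic_def hyp_sys_def by blast
    have hs4: "hyp_sys Q (4*a) e f" using hyp_sys_mono[OF hs] r4 H by auto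
    obtain p q where pq: "planes Q (4*a) p q" and tr: "transfer Q (4*a) e f (4*a) p q"
      using core_planes[OF vs qf hs4] by blast
    have ra: "4*a + 1 < r" using r4 H by auto
    have o: "\<forall>i<4*a. assoc_bilinear Q (e i) w = 0 \<and> assoc_bilinear Q (f i) w = 0"
      if "w = e (4*a) \<or> w = f (4*a)" for w
      using that hs ra unfolding hyp_sys_def by (auto simp: Bs[of "f _" "e _"])
    have P1: "planes Q (Suc (4*a)) (p(4*a := e (4*a))) (q(4*a := f (4*a)))"
      by (rule planes_ext[OF vs qf pq]) (use hs ra tr o in \<open>auto simp: hyp_sys_def transfer_def\<close>)
    have ox: "\<forall>i<4*a. assoc_bilinear Q (e i) w = 0 \<and> assoc_bilinear Q (f i) w = 0"
      if "w = x \<or> w = y" for w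
      using that xo ra by auto
    define p2 where "p2 = p(4*a := e (4*a), Suc (4*a) := x)"
    define q2 where "q2 = q(4*a := f (4*a), Suc (4*a) := y)"
    have trb: "assoc_bilinear Q (p b) w = 0 \<and> assoc_bilinear Q (q b) w = 0"
      if "b < 4*a" "\<forall>i<4*a. assoc_bilinear Q (e i) w = 0 \<and> assoc_bilinear Q (f i) w = 0" for b w
      using tr that unfolding transfer_def by blast
    have ex: "assoc_bilinear Q (e (4*a)) x = 0" "assoc_bilinear Q (e (4*a)) y = 0"
         "assoc_bilinear Q (f (4*a)) x = 0" "assoc_bilinear Q (f (4*a)) y = 0"
      using xo ra by auto
    have P2: "planes Q (Suc (Suc (4*a))) p2 q2"
      unfolding p2_def q2_def
    proof (rule planes_ext[OF vs qf P1])
      show "assoc_bilinear Q x y = 1" "Q x = (if odd (Suc (4 * a)) then 1 else 0)"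
        "Q y = (if odd (Suc (4 * a)) then 1 else 0)" using xy by simp_all
      show "\<forall>b<Suc (4 * a). assoc_bilinear Q ((p(4 * a := e (4 * a))) b) x = 0 \<and>
        assoc_bilinear Q ((p(4 * a := e (4 * a))) b) y = 0 \<and>
        assoc_bilinear Q ((q(4 * a := f (4 * a))) b) x = 0 \<and> assoc_bilinear Q ((q(4 * a := f (4 * a))) b) y = 0"
      proof (intro allI impI)
        fix b assume "b < Suc (4*a)"
        then consider "b < 4*a" | "b = 4*a" by linarith
        then show "assoc_bilinear Q ((p(4 * a := e (4 * a))) b) x = 0 \<and>
        assoc_bilinear Q ((p(4 * a := e (4 * a))) b) y = 0 \<and>
        assoc_bilinear Q ((q(4 * a := f (4 * a))) b) x = 0 \<and> assoc_bilinear Q ((q(4 * a := f (4 * a))) b) y = 0"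
        proof cases
          case 1 then show ?thesis using trb[OF 1 ox[of x]] trb[OF 1 ox[of y]] by simp
        next
          case 2 then show ?thesis using ex by simp
        qed
      qed
    qed
    consider "r mod 4 = 2" | "r mod 4 = 3" using H by argo
    then show "has_symmetric_basis scale (2*r) Q"
    proof cases
      case 1
      then have "r = Suc (Suc (4*a))" using r4 by simp
      then show ?thesis using fin P2 by simp
    next
      case 2
      have rb: "4*a + 2 < r" using r4 2 by simp
      have rr: "r = Suc (Suc (Suc (4*a)))" using r4 2 by simp
      define z where "z = Suc (4*a)"
      have o2: "\<forall>i<4*a. assoc_bilinear Q (e i) w = 0 \<and> assoc_bilinear Q (f i) w = 0"
        if "w = e z \<or> w = f z" for w
        using that hs rb unfolding hyp_sys_def z_def by (auto simp: Bs[of "f _" "e _"])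
      have hz: "assoc_bilinear Q (e (4*a)) (e z) = 0" "assoc_bilinear Q (e (4*a)) (f z) = 0"
        "assoc_bilinear Q (f (4*a)) (e z) = 0" "assoc_bilinear Q (f (4*a)) (f z) = 0"
        "assoc_bilinear Q (e z) (f z) = 1" "Q (e z) = 0" "Q (f z) = 0"
        using hs rb unfolding hyp_sys_def z_def by (auto simp: Bs[of "f _" "e _"])
      have xz: "assoc_bilinear Q x (e z) = 0" "assoc_bilinear Q x (f z) = 0"
        "assoc_bilinear Q y (e z) = 0" "assoc_bilinear Q y (f z) = 0"
        using xo rb unfolding z_def by (auto simp: Bs[of x] Bs[of y])
      have "planes Q (Suc (Suc z)) (p2(Suc z := e z)) (q2(Suc z := f z))"
      proof (rule planes_ext[OF vs qf P2[folded z_def]])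
        show "assoc_bilinear Q (e z) (f z) = 1" "Q (e z) = (if odd (Suc z) then 1 else 0)"
          "Q (f z) = (if odd (Suc z) then 1 else 0)" using hz by (simp_all add: z_def)
        show "\<forall>b<Suc z. assoc_bilinear Q (p2 b) (e z) = 0 \<and> assoc_bilinear Q (p2 b) (f z) = 0 \<and>
           assoc_bilinear Q (q2 b) (e z) = 0 \<and> assoc_bilinear Q (q2 b) (f z) = 0"
        proof (intro allI impI)
          fix b assume "b < Suc z"
          then consider "b < 4*a" | "b = 4*a" | "b = z" unfolding z_def by linarith
          then show "assoc_bilinear Q (p2 b) (e z) = 0 \<and> assoc_bilinear Q (p2 b) (f z) = 0 \<and>
           assoc_bilinear Q (q2 b) (e z) = 0 \<and> assoc_bilinear Q (q2 b) (f z) = 0"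
          proof cases
            case 1 then show ?thesis using trb[OF 1 o2[of "e z"]] trb[OF 1 o2[of "f z"]]
              by (simp add: p2_def q2_def z_def)
          next
            case 2 then show ?thesis using hz by (simp add: p2_def q2_def z_def)
          next
            case 3 then show ?thesis using xz by (simp add: p2_def q2_def z_def)
          qed
        qed
      qed
      moreover have "r = Suc (Suc z)" using rr unfolding z_def by simp
      ultimately show ?thesis using fin by simp
    qed
  qed
qed

end
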